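(* Let $k\ge1$ and $\ell\ge1$. The set $\{n\in A_{2k}:\max\mathcal{CG}(n)=F_{2k+2\ell}\}$ is exactly $\{q(j):F_{2\ell+1}+1\le j\le F_{2\ell+3}\}$; i.e. its elements occupy precisely positions $F_{2\ell+1}+1$ through $F_{2\ell+3}$ (inclusive) in the increasing enumeration of $A_{2k}$.
   Context: Fibonacci numbers: $F_1=F_2=1$, $F_{n+1}=F_n+F_{n-1}$ for $n\ge2$. Chung–Graham decomposition: every positive integer $n$ has a unique representation $n=\sum_{i\ge1}c_iF_{2i}$ with $c_i\in\{0,1,2\}$, only finitely many nonzero, such that whenever $c_i=c_j=2$ with $i<j$ there is $k$ with $i<k<j$ and $c_k=0$. Let $\mathcal{CG}(n)$ be the set of $F_{2i}$ with $c_i\neq0$. For $k\ge1$, $A_{2k}=\{n\ge1:\min\mathcal{CG}(n)=F_{2k}\}$, and $q(1)<q(2)<q(3)<\cdots$ denote the elements of $A_{2k}$ listed in increasing order. *)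

theory Defs
  imports Main "HOL-Number_Theory.Fib" "HOL-Library.Infinite_Set"
begin

text \<open>Fibonacci numbers: fib 1 = fib 2 = 1 (library function fib).\<close>

definition cg_rep :: "nat \<Rightarrow> (nat \<Rightarrow> nat) \<Rightarrow> bool" where
  "cg_rep n c \<longleftrightarrow>
     (\<forall>i. c i \<le> 2) \<and> c 0 = 0 \<and> finite {i. c i \<noteq> 0} \<and>
     n = (\<Sum>i\<in>{i. c i \<noteq> 0}. c i * fib (2 * i)) \<and>
     (\<forall>i j. 1 \<le> i \<longrightarrow> i < j \<longrightarrow> c i = 2 \<longrightarrow> c j = 2 \<longrightarrow>
        (\<exists>m. i < m \<and> m < j \<and> c m = 0))"

definition cg_digits :: "nat \<Rightarrow> nat \<Rightarrow> nat" where
  "cg_digits n = (THE c. cg_rep n c)"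

definition CG :: "nat \<Rightarrow> nat set" where
  "CG n = {fib (2 * i) | i. i \<ge> 1 \<and> cg_digits n i \<noteq> 0}"

definition A2k :: "nat \<Rightarrow> nat set" where
  "A2k k = {n. n \<ge> 1 \<and> Min (CG n) = fib (2 * k)}"

text \<open>q k j: the j-th element (1-indexed) of A_{2k} in increasing order.\<close>
definition q :: "nat \<Rightarrow> nat \<Rightarrow> nat" where
  "q k j = enumerate (A2k k) (j - 1)"

end

theory Submission
  imports Defs
begin



lemma fib_even_strict: "1 \<le> i \<Longrightarrow> i < j \<Longrightarrow> fib (2*i) < fib (2*j)"
proof (induction j)
  case 0 then show ?case by simp
next
  case (Suc j)
  have a: "fib (2*j) < fib (2*Suc j)"
  proof -
    have "fib (2*Suc j) = fib (2*j+1) + fib (2*j)"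
      using fib_plus_2[of "2*j"] by simp
    moreover have "fib (2*j+1) > 0" by (simp add: fib_neq_0_nat)
    ultimately show ?thesis by simp
  qed
  show ?case
  proof (cases "i < j")
    case True then show ?thesis using Suc a by simp
  next
    case False then have "i = j" using Suc by simp
    then show ?thesis using a by simp
  qed
qed

lemma fib_even_inj: "1 \<le> i \<Longrightarrow> 1 \<le> j \<Longrightarrow> fib (2*i) = fib (2*j) \<Longrightarrow> i = j"
  by (metis fib_even_strict less_irrefl linorder_neqE_nat)

lemma fib_lt: "n < fib (2*n+2)"
proof (induction n)
  case 0 then show ?case by simp
next
  case (Suc n)
  have "fib (2*Suc n+2) = fib (2*n+3) + fib(2*n+2)"
    using fib_plus_2[of "2*n+2"] by (simp add: numeral_eq_Suc)
  moreover have "fib (2*n+3) > 0" by (simp add: fib_neq_0_nat)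
  ultimately show ?case using Suc by simp
qed

lemma fibS: "fib (Suc (Suc n)) = fib (Suc n) + fib n" by simp

definition valid :: "(nat \<Rightarrow> nat) \<Rightarrow> bool" where
  "valid c \<longleftrightarrow> (\<forall>i. c i \<le> 2) \<and> (\<forall>i j. 1 \<le> i \<longrightarrow> i < j \<longrightarrow> c i = 2 \<longrightarrow> c j = 2 \<longrightarrow>
        (\<exists>m. i < m \<and> m < j \<and> c m = 0))"

definition supp :: "(nat \<Rightarrow> nat) \<Rightarrow> nat \<Rightarrow> bool" where
  "supp c m \<longleftrightarrow> (\<forall>i. (i = 0 \<or> m < i) \<longrightarrow> c i = 0)"

definition free :: "(nat \<Rightarrow> nat) \<Rightarrow> nat \<Rightarrow> bool" where
  "free c m \<longleftrightarrow> (\<forall>i. 1 \<le> i \<longrightarrow> i \<le> m \<longrightarrow> c i = 2 \<longrightarrow> (\<exists>t. i < t \<and> t \<le> m \<and> c t = 0))"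

definition sumc :: "(nat \<Rightarrow> nat) \<Rightarrow> nat \<Rightarrow> nat" where
  "sumc c m = (\<Sum>i=1..m. c i * fib (2*i))"

lemma sumc_0[simp]: "sumc c 0 = 0" by (simp add: sumc_def)
lemma sumc_Suc: "sumc c (Suc m) = sumc c m + c (Suc m) * fib (2 * Suc m)"
  by (simp add: sumc_def)

lemma bound:
  assumes "valid c"
  shows "sumc c m < fib (2*m+2) \<and> (free c m \<longrightarrow> sumc c m < fib (2*m+1))"
proof (induction m)
  case 0 then show ?case by simp
next
  case (Suc m)
  define M where "M = Suc m"
  have f1: "fib (2*M+1) = fib (2*m+1) + fib (2*M)" using fibS[of "2*m+1"] by (simp add: M_def)
  have f2: "fib (2*M+2) = fib (2*M+1) + fib (2*M)" using fibS[of "2*M"] by simp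
  have f3: "fib (2*M) = fib (2*m+2)" by (simp add: M_def)
  have f4: "fib (2*m+1) \<le> fib (2*m+2)" by (simp add: fib_mono)
  have s: "sumc c M = sumc c m + c M * fib (2*M)" by (simp add: M_def sumc_Suc)
  have cM: "c M \<le> 2" using assms by (simp add: valid_def)
  consider "c M = 0" | "c M = 1" | "c M = 2" using cM by linarith
  then have "sumc c M < fib (2*M+2) \<and> (free c M \<longrightarrow> sumc c M < fib (2*M+1))"
  proof cases
    case 1 then show ?thesis using Suc s f1 f2 f3 by simp
  next
    case 2
    have "free c M \<longrightarrow> free c m"
      unfolding free_def
    proof (intro impI allI)
      fix i assume fr: "\<forall>i. 1 \<le> i \<longrightarrow> i \<le> M \<longrightarrow> c i = 2 \<longrightarrow> (\<exists>t>i. t \<le> M \<and> c t = 0)"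
        and h: "1 \<le> i" "i \<le> m" "c i = 2"
      then obtain t where "t > i" "t \<le> M" "c t = 0" by (auto simp: M_def)
      then show "\<exists>t>i. t \<le> m \<and> c t = 0" using 2 by (metis M_def le_SucE zero_neq_one)
    qed
    then show ?thesis using Suc s f1 f2 f3 2 by auto
  next
    case 3
    have "free c m" unfolding free_def
    proof (intro impI allI)
      fix i assume h: "1 \<le> i" "i \<le> m" "c i = 2"
      then obtain t where "i < t" "t < M" "c t = 0" using assms 3 unfolding valid_def M_def
        by (metis less_Suc_eq_le)
      then show "\<exists>t>i. t \<le> m \<and> c t = 0" by (auto simp: M_def)
    qed
    moreover have "\<not> free c M" unfolding free_def using 3 by (auto simp: M_def)
    ultimately show ?thesis using Suc s f1 f2 f3 3 by auto
  qed
  then show ?case by (simp add: M_def)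
qed

lemma uniq:
  assumes "valid c" "valid d" "sumc c m = sumc d m"
  shows "\<forall>i. 1 \<le> i \<longrightarrow> i \<le> m \<longrightarrow> c i = d i"
  using assms(3)
proof (induction m)
  case 0 then show ?case by simp
next
  case (Suc m)
  have bc: "sumc c m < fib (2 * Suc m)" using bound[OF assms(1), of m] by simp
  have bd: "sumc d m < fib (2 * Suc m)" using bound[OF assms(2), of m] by simp
  have e: "sumc c m + c (Suc m) * fib (2 * Suc m) = sumc d m + d (Suc m) * fib (2 * Suc m)"
    using Suc.prems by (simp add: sumc_Suc)
  have "c (Suc m) = d (Suc m)"
  proof (rule ccontr)
    assume ne: "c (Suc m) \<noteq> d (Suc m)"
    show False
    proof (cases "c (Suc m) < d (Suc m)")
      case True
      then have "d (Suc m) * fib (2 * Suc m) \<ge> c (Suc m) * fib (2 * Suc m) + fib (2 * Suc m)"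
        by (metis add.commute mult_Suc mult_le_mono1 Suc_leI)
      then show False using e bc by linarith
    next
      case False
      then have "c (Suc m) * fib (2 * Suc m) \<ge> d (Suc m) * fib (2 * Suc m) + fib (2 * Suc m)"
        using ne by (metis add.commute mult_Suc mult_le_mono1 Suc_leI linorder_neqE_nat)
      then show False using e bd by linarith
    qed
  qed
  then have "sumc c m = sumc d m" using e by simp
  then show ?case using Suc.IH `c (Suc m) = d (Suc m)` by (metis le_Suc_eq)
qed




lemma exist:
  "\<forall>n. n < fib (2*m+2) \<longrightarrow> (\<exists>c. valid c \<and> supp c m \<and> sumc c m = n \<and> (n < fib (2*m+1) \<longrightarrow> free c m))"
proof (induction m)
  case 0
  show ?case
  proof (intro allI impI)
    fix n :: nat assume "n < fib (2*0+2)"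
    then have "n = 0" by simp
    then show "\<exists>c. valid c \<and> supp c 0 \<and> sumc c 0 = n \<and> (n < fib (2*0+1) \<longrightarrow> free c 0)"
      by (intro exI[of _ "\<lambda>_. 0"]) (auto simp: valid_def supp_def free_def)
  qed
next
  case (Suc m)
  define M where "M = Suc m"
  have f1: "fib (2*M+1) = fib (2*m+1) + fib (2*M)" using fibS[of "2*m+1"] by (simp add: M_def)
  have f2: "fib (2*M+2) = fib (2*M+1) + fib (2*M)" using fibS[of "2*M"] by simp
  have f3: "fib (2*M) = fib (2*m+2)" by (simp add: M_def)
  have f4: "fib (2*m+1) \<le> fib (2*m+2)" by (simp add: fib_mono)
  have "\<forall>n. n < fib (2*M+2) \<longrightarrow> (\<exists>c. valid c \<and> supp c M \<and> sumc c M = n \<and> (n < fib (2*M+1) \<longrightarrow> free c M))"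
  proof (intro allI impI)
    fix n assume n: "n < fib (2*M+2)"
    consider "n < fib (2*M)" | "fib (2*M) \<le> n" "n < 2 * fib (2*M)" | "2 * fib (2*M) \<le> n" by linarith
    then show "\<exists>c. valid c \<and> supp c M \<and> sumc c M = n \<and> (n < fib (2*M+1) \<longrightarrow> free c M)"
    proof cases
      case 1
      then have "n < fib (2*m+2)" using f3 by simp
      then obtain c where c: "valid c" "supp c m" "sumc c m = n" using Suc.IH by blast
      have cM: "c M = 0" using c(2) by (simp add: supp_def M_def)
      have "supp c M" using c(2) by (auto simp: supp_def M_def)
      moreover have "sumc c M = n" using c cM by (simp add: M_def sumc_Suc)
      moreover have "free c M" unfolding free_def
      proof (intro allI impI)
        fix i assume "1 \<le> i" "i \<le> M" "c i = 2"
        then have "i < M" using cM by (cases "i = M") auto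
        then show "\<exists>t>i. t \<le> M \<and> c t = 0" using cM by blast
      qed
      ultimately show ?thesis using c(1) by blast
    next
      case 2
      define r where "r = n - fib (2*M)"
      have r: "r < fib (2*m+2)" using 2 f3 by (simp add: r_def)
      then obtain c where c: "valid c" "supp c m" "sumc c m = r" "r < fib (2*m+1) \<longrightarrow> free c m"
        using Suc.IH by blast
      have cM: "c M = 0" using c(2) by (simp add: supp_def M_def)
      define c' where "c' = c(M := 1)"
      have v: "valid c'" unfolding valid_def
      proof (intro conjI allI impI)
        fix i show "c' i \<le> 2" using c(1) by (simp add: c'_def valid_def)
      next
        fix i j assume h: "1 \<le> i" "i < j" "c' i = 2" "c' j = 2"
        have V: "\<And>i j. 1 \<le> i \<Longrightarrow> i < j \<Longrightarrow> c i = 2 \<Longrightarrow> c j = 2 \<Longrightarrow> \<exists>t. i < t \<and> t < j \<and> c t = 0"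
          using c(1) unfolding valid_def by blast
        have "i \<noteq> M" "j \<noteq> M" using h(3,4) unfolding c'_def by auto
        then have ci: "c i = 2" "c j = 2" using h(3,4) unfolding c'_def by auto
        have "\<not> m < j" using c(2) ci(2) unfolding supp_def by auto
        then have jm: "j \<le> m" by simp
        obtain t where t: "i < t" "t < j" "c t = 0" using V[OF h(1,2) ci] by blast
        have "t \<noteq> M" using t jm unfolding M_def by simp
        then have "c' t = 0" using t unfolding c'_def by simp
        then show "\<exists>t>i. t < j \<and> c' t = 0" using t by blast
      qed
      have "supp c' M" using c(2) by (auto simp: supp_def c'_def M_def)
      moreover have "sumc c' M = n"
      proof -
        have "sumc c' m = sumc c m" unfolding sumc_def c'_def M_def by (intro sum.cong) auto
        then show ?thesis using c(3) 2 by (simp add: sumc_Suc M_def c'_def r_def)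
      qed
      moreover have "n < fib (2*M+1) \<longrightarrow> free c' M"
      proof
        assume "n < fib (2*M+1)"
        then have "r < fib (2*m+1)" using f1 2 unfolding r_def by linarith
        then have "free c m" using c(4) by blast
        show "free c' M" unfolding free_def
        proof (intro allI impI)
          fix i assume h: "1 \<le> i" "i \<le> M" "c' i = 2"
          have iM: "i \<noteq> M" using h(3) unfolding c'_def by auto
          then have im: "i \<le> m" using h(2) unfolding M_def by simp
          have ci: "c i = 2" using h(3) iM unfolding c'_def by simp
          obtain t where t: "i < t" "t \<le> m" "c t = 0" using `free c m` h(1) im ci unfolding free_def by blast
          have "t \<noteq> M" "t \<le> M" using t(2) unfolding M_def by simp_all
          then have "c' t = 0" using t(3) unfolding c'_def by simp
          then show "\<exists>t>i. t \<le> M \<and> c' t = 0" using t(1) `t \<le> M` by blast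
        qed
      qed
      ultimately show ?thesis using v by blast
    next
      case 3
      define r where "r = n - 2 * fib (2*M)"
      have r: "r < fib (2*m+1)" using 3 n f1 f2 f3 by (simp add: r_def)
      then have "r < fib (2*m+2)" using f4 by linarith
      then obtain c where c: "valid c" "supp c m" "sumc c m = r" "free c m"
        using Suc.IH r by blast
      have cM: "c M = 0" using c(2) by (simp add: supp_def M_def)
      define c' where "c' = c(M := 2)"
      have v: "valid c'" unfolding valid_def
      proof (intro conjI allI impI)
        fix i show "c' i \<le> 2" using c(1) by (simp add: c'_def valid_def)
      next
        fix i j assume h: "1 \<le> i" "i < j" "c' i = 2" "c' j = 2"
        have V: "\<And>i j. 1 \<le> i \<Longrightarrow> i < j \<Longrightarrow> c i = 2 \<Longrightarrow> c j = 2 \<Longrightarrow> \<exists>t. i < t \<and> t < j \<and> c t = 0"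
          using c(1) unfolding valid_def by blast
        have S: "\<And>i. m < i \<Longrightarrow> c i = 0" using c(2) unfolding supp_def by blast
        have jle: "j \<le> M"
        proof (rule ccontr)
          assume a: "\<not> j \<le> M"
          then have "j \<noteq> M" "m < j" unfolding M_def by simp_all
          then have "c' j = 0" using S unfolding c'_def by simp
          then show False using h(4) by simp
        qed
        then have iM: "i \<noteq> M" "i \<le> m" using h(2) unfolding M_def by simp_all
        then have ci: "c i = 2" using h(3) unfolding c'_def by simp
        show "\<exists>t>i. t < j \<and> c' t = 0"
        proof (cases "j = M")
          case True
          obtain t where t: "i < t" "t \<le> m" "c t = 0" using c(4) ci h(1) iM(2) unfolding free_def by blast
          have "t \<noteq> M" "t < j" using t(2) True unfolding M_def by simp_all
          then have "c' t = 0" using t(3) unfolding c'_def by simp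
          then show ?thesis using t(1) `t < j` by blast
        next
          case False
          then have cj: "c j = 2" using h(4) unfolding c'_def by simp
          obtain t where t: "i < t" "t < j" "c t = 0" using V[OF h(1,2) ci cj] by blast
          have "t \<noteq> M" using t(2) jle by simp
          then have "c' t = 0" using t(3) unfolding c'_def by simp
          then show ?thesis using t(1,2) by blast
        qed
      qed
      have "supp c' M" using c(2) by (auto simp: supp_def c'_def M_def)
      moreover have "sumc c' M = n"
      proof -
        have "sumc c' m = sumc c m" unfolding sumc_def c'_def M_def by (intro sum.cong) auto
        then show ?thesis using c(3) 3 by (simp add: sumc_Suc M_def c'_def r_def)
      qed
      moreover have "\<not> n < fib (2*M+1)" using 3 f1 f3 f4 by linarith
      ultimately show ?thesis using v by blast
    qed
  qed
  then show ?case by (simp add: M_def)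
qed




lemma pos_idx: "c 0 = 0 \<Longrightarrow> 0 < (c::nat\<Rightarrow>nat) i \<Longrightarrow> 0 < i" by (cases i) auto

lemma rep_of:
  assumes "valid c" "supp c m" "sumc c m = n"
  shows "cg_rep n c"
proof -
  have sub: "{i. c i \<noteq> 0} \<subseteq> {1..m}"
  proof
    fix i assume "i \<in> {i. c i \<noteq> 0}"
    then have "\<not> (i = 0 \<or> m < i)" using assms(2) unfolding supp_def by (cases "i = 0") auto
    then show "i \<in> {1..m}" by auto
  qed
  have "sumc c m = (\<Sum>i\<in>{i. c i \<noteq> 0}. c i * fib (2 * i))"
    unfolding sumc_def by (rule sum.mono_neutral_right) (use sub in auto)
  then show ?thesis using assms sub finite_subset[OF sub]
    unfolding cg_rep_def valid_def supp_def by auto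
qed

lemma rep_uniq:
  assumes "cg_rep n c" "cg_rep n d" shows "c = d"
proof -
  have fc: "finite {i. c i \<noteq> 0}" and fd: "finite {i. d i \<noteq> 0}" using assms by (auto simp: cg_rep_def)
  have "finite ({i. c i \<noteq> 0} \<union> {i. d i \<noteq> 0})" using fc fd by simp
  then obtain m where m: "\<forall>i\<in>{i. c i \<noteq> 0} \<union> {i. d i \<noteq> 0}. i \<le> m"
    using finite_nat_set_iff_bounded_le by blast
  have sc: "n = sumc c m"
  proof -
    have "n = (\<Sum>i\<in>{i. c i \<noteq> 0}. c i * fib (2 * i))" using assms(1) by (simp add: cg_rep_def)
    also have "\<dots> = sumc c m" unfolding sumc_def
      apply (rule sum.mono_neutral_left) using m assms(1) pos_idx[of c] by (auto simp: cg_rep_def Suc_le_eq)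
    finally show ?thesis .
  qed
  have sd: "n = sumc d m"
  proof -
    have "n = (\<Sum>i\<in>{i. d i \<noteq> 0}. d i * fib (2 * i))" using assms(2) by (simp add: cg_rep_def)
    also have "\<dots> = sumc d m" unfolding sumc_def
      apply (rule sum.mono_neutral_left) using m assms(2) pos_idx[of d] by (auto simp: cg_rep_def Suc_le_eq)
    finally show ?thesis .
  qed
  have vc: "valid c" "valid d" using assms by (auto simp: cg_rep_def valid_def)
  have "sumc c m = sumc d m" using sc sd by simp
  then have eq: "\<forall>i. 1 \<le> i \<longrightarrow> i \<le> m \<longrightarrow> c i = d i" using uniq[OF vc] by blast
  show "c = d"
  proof
    fix i
    have z: "c 0 = 0" "d 0 = 0" using assms unfolding cg_rep_def by simp_all
    show "c i = d i"
    proof (cases "i = 0")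
      case True then show ?thesis using z by simp
    next
      case False
      show ?thesis
      proof (cases "i \<le> m")
        case True then show ?thesis using eq False by simp
      next
        case F2: False
        have "c i = 0" using m F2 by auto
        moreover have "d i = 0" using m F2 by auto
        ultimately show ?thesis by simp
      qed
    qed
  qed
qed

lemma digits_eq:
  assumes "valid c" "supp c m" "sumc c m = n"
  shows "cg_digits n = c"
  unfolding cg_digits_def using rep_of[OF assms] rep_uniq by blast

lemma digits_ex:
  assumes "n < fib (2*m+2)"
  shows "valid (cg_digits n) \<and> supp (cg_digits n) m \<and> sumc (cg_digits n) m = n \<and>
         (n < fib (2*m+1) \<longrightarrow> free (cg_digits n) m)"
proof -
  obtain c where c: "valid c" "supp c m" "sumc c m = n" "n < fib (2*m+1) \<longrightarrow> free c m"
    using exist[of m] assms by blast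
  then have "cg_digits n = c" using digits_eq by blast
  then show ?thesis using c by simp
qed




lemma valid_upd1:
  assumes "valid c" "supp c p"
  shows "valid (c(Suc p := 1))" (is "valid ?c")
  unfolding valid_def
proof (intro conjI allI impI)
  fix i show "?c i \<le> 2" using assms(1) by (simp add: valid_def)
next
  fix i j assume h: "1 \<le> i" "i < j" "?c i = 2" "?c j = 2"
  have V: "\<And>i j. 1 \<le> i \<Longrightarrow> i < j \<Longrightarrow> c i = 2 \<Longrightarrow> c j = 2 \<Longrightarrow> \<exists>t. i < t \<and> t < j \<and> c t = 0"
    using assms(1) unfolding valid_def by blast
  have "i \<noteq> Suc p" "j \<noteq> Suc p" using h(3,4) by auto
  then have ci: "c i = 2" "c j = 2" using h(3,4) by auto
  have "\<not> p < j" using assms(2) ci(2) unfolding supp_def by auto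
  then have jm: "j \<le> p" by simp
  obtain t where t: "i < t" "t < j" "c t = 0" using V[OF h(1,2) ci] by blast
  have "t \<noteq> Suc p" using t jm by simp
  then have "?c t = 0" using t by simp
  then show "\<exists>t>i. t < j \<and> ?c t = 0" using t by blast
qed

lemma valid_upd2:
  assumes "valid c" "supp c p" "free c p"
  shows "valid (c(Suc p := 2))" (is "valid ?c")
  unfolding valid_def
proof (intro conjI allI impI)
  fix i show "?c i \<le> 2" using assms(1) by (simp add: valid_def)
next
  fix i j assume h: "1 \<le> i" "i < j" "?c i = 2" "?c j = 2"
  have V: "\<And>i j. 1 \<le> i \<Longrightarrow> i < j \<Longrightarrow> c i = 2 \<Longrightarrow> c j = 2 \<Longrightarrow> \<exists>t. i < t \<and> t < j \<and> c t = 0"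
    using assms(1) unfolding valid_def by blast
  have S: "\<And>i. p < i \<Longrightarrow> c i = 0" using assms(2) unfolding supp_def by blast
  have jle: "j \<le> Suc p"
  proof (rule ccontr)
    assume a: "\<not> j \<le> Suc p"
    then have "j \<noteq> Suc p" "p < j" by simp_all
    then have "?c j = 0" using S by simp
    then show False using h(4) by simp
  qed
  then have iM: "i \<noteq> Suc p" "i \<le> p" using h(2) by simp_all
  then have ci: "c i = 2" using h(3) by simp
  show "\<exists>t>i. t < j \<and> ?c t = 0"
  proof (cases "j = Suc p")
    case True
    obtain t where t: "i < t" "t \<le> p" "c t = 0" using assms(3) ci h(1) iM(2) unfolding free_def by blast
    have "t \<noteq> Suc p" "t < j" using t(2) True by simp_all
    then have "?c t = 0" using t(3) by simp
    then show ?thesis using t(1) `t < j` by blast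
  next
    case False
    then have cj: "c j = 2" using h(4) by simp
    obtain t where t: "i < t" "t < j" "c t = 0" using V[OF h(1,2) ci cj] by blast
    have "t \<noteq> Suc p" using t(2) jle by simp
    then have "?c t = 0" using t(3) by simp
    then show ?thesis using t(1,2) by blast
  qed
qed

lemma supp_upd: "supp c p \<Longrightarrow> supp (c(Suc p := x)) (Suc p)"
  unfolding supp_def by auto

lemma sumc_upd: "supp c p \<Longrightarrow> sumc (c(Suc p := x)) (Suc p) = sumc c p + x * fib (2 * Suc p)"
proof -
  assume "supp c p"
  have "sumc (c(Suc p := x)) p = sumc c p" unfolding sumc_def by (intro sum.cong) auto
  then show ?thesis by (simp add: sumc_Suc)
qed

lemma set_upd:
  assumes "c (Suc p) = 0" "x \<noteq> 0"
  shows "{fib (2 * i) | i. i \<ge> 1 \<and> (c(Suc p := x)) i \<noteq> 0} = insert (fib (2 * Suc p)) {fib (2 * i) | i. i \<ge> 1 \<and> c i \<noteq> 0}"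
proof (intro equalityI subsetI)
  fix y assume "y \<in> {fib (2 * i) | i. i \<ge> 1 \<and> (c(Suc p := x)) i \<noteq> 0}"
  then obtain i where i: "y = fib (2*i)" "i \<ge> 1" "(c(Suc p := x)) i \<noteq> 0" by blast
  show "y \<in> insert (fib (2 * Suc p)) {fib (2 * i) | i. i \<ge> 1 \<and> c i \<noteq> 0}"
  proof (cases "i = Suc p")
    case True then show ?thesis using i by simp
  next
    case False then have "c i \<noteq> 0" using i(3) by simp
    then show ?thesis using i by blast
  qed
next
  fix y assume y: "y \<in> insert (fib (2 * Suc p)) {fib (2 * i) | i. i \<ge> 1 \<and> c i \<noteq> 0}"
  show "y \<in> {fib (2 * i) | i. i \<ge> 1 \<and> (c(Suc p := x)) i \<noteq> 0}"
  proof (cases "y = fib (2 * Suc p)")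
    case True
    have "(c(Suc p := x)) (Suc p) \<noteq> 0" using assms(2) by simp
    then show ?thesis using True by (intro CollectI exI[of _ "Suc p"]) simp
  next
    case False
    then obtain i where i: "y = fib (2*i)" "i \<ge> 1" "c i \<noteq> 0" using y by blast
    then have "i \<noteq> Suc p" using assms(1) by auto
    then have "(c(Suc p := x)) i \<noteq> 0" using i(3) by simp
    then show ?thesis using i by blast
  qed
qed

lemma CG_of:
  assumes "valid c" "supp c m" "sumc c m = n"
  shows "CG n = {fib (2 * i) | i. i \<ge> 1 \<and> c i \<noteq> 0}"
  using digits_eq[OF assms] unfolding CG_def by simp

lemma CG_shift1:
  assumes "r < fib (2 * Suc p)"
  shows "CG (r + fib (2 * Suc p)) = insert (fib (2 * Suc p)) (CG r)"
    and "\<forall>x\<in>CG r. x < fib (2 * Suc p)"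
proof -
  let ?c = "cg_digits r"
  have d: "valid ?c" "supp ?c p" "sumc ?c p = r" using digits_ex[of r p] assms by simp_all
  have S: "\<And>i. p < i \<Longrightarrow> ?c i = 0" using d(2) unfolding supp_def by blast
  have cr: "CG r = {fib (2 * i) | i. i \<ge> 1 \<and> ?c i \<noteq> 0}" unfolding CG_def ..
  have e: "sumc (?c(Suc p := 1)) (Suc p) = r + fib (2 * Suc p)"
    using sumc_upd[OF d(2), of 1] unfolding d(3) by simp
  have "CG (r + fib (2 * Suc p)) = {fib (2 * i) | i. i \<ge> 1 \<and> (?c(Suc p := 1)) i \<noteq> 0}"
    by (rule CG_of[OF valid_upd1[OF d(1,2)] supp_upd[OF d(2)] e])
  also have "\<dots> = insert (fib (2 * Suc p)) (CG r)"
    unfolding cr using S by (intro set_upd) simp_all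
  finally show "CG (r + fib (2 * Suc p)) = insert (fib (2 * Suc p)) (CG r)" .
  show "\<forall>x\<in>CG r. x < fib (2 * Suc p)"
  proof
    fix x assume "x \<in> CG r"
    then obtain i where "x = fib (2*i)" "i \<ge> 1" "?c i \<noteq> 0" unfolding cr by blast
    then have "i \<le> p" using S by (meson not_le)
    then show "x < fib (2 * Suc p)" using fib_even_strict[of i "Suc p"] `x = fib (2*i)` `i \<ge> 1` by simp
  qed
qed

lemma CG_shift2:
  assumes "r < fib (2 * p + 1)"
  shows "CG (r + 2 * fib (2 * Suc p)) = insert (fib (2 * Suc p)) (CG r)"
proof -
  let ?c = "cg_digits r"
  have "fib (2*p+1) \<le> fib (2*p+2)" by (simp add: fib_mono)
  then have d: "valid ?c" "supp ?c p" "sumc ?c p = r" "free ?c p" using digits_ex[of r p] assms by simp_all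
  have S: "\<And>i. p < i \<Longrightarrow> ?c i = 0" using d(2) unfolding supp_def by blast
  have cr: "CG r = {fib (2 * i) | i. i \<ge> 1 \<and> ?c i \<noteq> 0}" unfolding CG_def ..
  have e: "sumc (?c(Suc p := 2)) (Suc p) = r + 2 * fib (2 * Suc p)"
    using sumc_upd[OF d(2), of 2] unfolding d(3) by (simp only:)
  have "CG (r + 2 * fib (2 * Suc p)) = {fib (2 * i) | i. i \<ge> 1 \<and> (?c(Suc p := 2)) i \<noteq> 0}"
    by (rule CG_of[OF valid_upd2[OF d(1,2,4)] supp_upd[OF d(2)] e])
  also have "\<dots> = insert (fib (2 * Suc p)) (CG r)"
    unfolding cr using S by (intro set_upd) simp_all
  finally show ?thesis .
qed

lemma CG_le: "x \<in> CG n \<Longrightarrow> x \<le> n"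
proof -
  assume x: "x \<in> CG n"
  let ?c = "cg_digits n"
  have d: "valid ?c" "supp ?c n" "sumc ?c n = n" using digits_ex[of n n] fib_lt[of n] by simp_all
  obtain i where i: "x = fib (2*i)" "i \<ge> 1" "?c i \<noteq> 0" using x unfolding CG_def by blast
  have "i \<le> n" using d(2) i(3) unfolding supp_def by (meson not_le)
  have "x \<le> ?c i * fib (2*i)" using i by simp
  also have "\<dots> \<le> sumc ?c n" unfolding sumc_def
    by (rule member_le_sum) (use i `i \<le> n` in auto)
  finally show ?thesis using d(3) by simp
qed

lemma CG_fin: "finite (CG n)"
proof -
  have "CG n \<subseteq> {..n}" using CG_le by auto
  then show ?thesis by (rule finite_subset) simp
qed

lemma CG_0: "CG 0 = {}"
proof (rule ccontr)
  assume "CG 0 \<noteq> {}"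
  then obtain x where x: "x \<in> CG 0" by blast
  then have "x \<le> 0" by (rule CG_le)
  moreover obtain i where "x = fib (2*i)" "i \<ge> 1" using x unfolding CG_def by blast
  moreover have "fib (2*i) > 0" using `i \<ge> 1` by (simp add: fib_neq_0_nat)
  ultimately show False by simp
qed

lemma CG_ne: "n \<ge> 1 \<Longrightarrow> CG n \<noteq> {}"
proof
  assume "n \<ge> 1" "CG n = {}"
  let ?c = "cg_digits n"
  have d: "sumc ?c n = n" using digits_ex[of n n] fib_lt[of n] by simp_all
  have "\<forall>i. i \<ge> 1 \<longrightarrow> ?c i = 0" using `CG n = {}` unfolding CG_def by blast
  then have "sumc ?c n = 0" unfolding sumc_def by simp
  then show False using d `n \<ge> 1` by simp
qed

lemma Min_shift:
  assumes "\<forall>x\<in>CG r. x < X"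
  shows "Min (insert X (CG r)) = (if r = 0 then X else Min (CG r))"
proof (cases "r = 0")
  case True then show ?thesis by (simp add: CG_0)
next
  case False
  then have ne: "CG r \<noteq> {}" using CG_ne by simp
  have "Min (CG r) < X" using assms Min_in[OF CG_fin ne] by blast
  then show ?thesis using False Min_insert[OF CG_fin ne] by simp
qed




declare fib2[simp del]

lemma A_ge: "n \<in> A2k k \<Longrightarrow> fib (2*k) \<le> n"
proof -
  assume "n \<in> A2k k"
  then have n: "n \<ge> 1" "Min (CG n) = fib (2*k)" unfolding A2k_def by auto
  have "Min (CG n) \<in> CG n" using Min_in[OF CG_fin CG_ne[OF n(1)]] .
  then show ?thesis using CG_le n(2) by metis
qed

lemma Min1:
  assumes "r < fib (2 * Suc p)"
  shows "Min (CG (r + fib (2 * Suc p))) = (if r = 0 then fib (2 * Suc p) else Min (CG r))"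
  using CG_shift1[OF assms] Min_shift by simp

lemma Min2:
  assumes "r < fib (2 * p + 1)"
  shows "Min (CG (r + 2 * fib (2 * Suc p))) = (if r = 0 then fib (2 * Suc p) else Min (CG r))"
proof -
  have "fib (2*p+1) \<le> fib (2 * Suc p)" by (simp add: fib_mono)
  then have "\<forall>x\<in>CG r. x < fib (2 * Suc p)" using CG_shift1(2)[of r p] assms by simp
  then show ?thesis using CG_shift2[OF assms] Min_shift by simp
qed

lemma Minr_lt:
  assumes "r < fib (2 * Suc p)" "r \<noteq> 0"
  shows "Min (CG r) < fib (2 * Suc p)"
proof -
  have "r \<ge> 1" using assms by simp
  then show ?thesis using CG_shift1(2)[OF assms(1)] Min_in[OF CG_fin CG_ne] by blast
qed

lemma memb1:
  assumes "1 \<le> k" "k \<le> p" "r < fib (2 * Suc p)"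
  shows "r + fib (2 * Suc p) \<in> A2k k \<longleftrightarrow> r \<in> A2k k"
proof (cases "r = 0")
  case True
  have "fib (2*k) < fib (2 * Suc p)" using fib_even_strict[of k "Suc p"] assms by simp
  then show ?thesis using True Min1[OF assms(3)] unfolding A2k_def by auto
next
  case False
  then show ?thesis using Min1[OF assms(3)] unfolding A2k_def by auto
qed

lemma memb2:
  assumes "1 \<le> k" "k \<le> p" "r < fib (2 * p + 1)"
  shows "r + 2 * fib (2 * Suc p) \<in> A2k k \<longleftrightarrow> r \<in> A2k k"
proof (cases "r = 0")
  case True
  have "fib (2*k) < fib (2 * Suc p)" using fib_even_strict[of k "Suc p"] assms by simp
  then show ?thesis using True Min2[OF assms(3)] unfolding A2k_def by auto
next
  case False
  then show ?thesis using Min2[OF assms(3)] unfolding A2k_def by auto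
qed

lemma base:
  assumes "n < fib (2 * Suc p + 2)"
  shows "n \<in> A2k (Suc p) \<longleftrightarrow> n = fib (2 * Suc p) \<or> n = 2 * fib (2 * Suc p)"
proof -
  let ?F = "fib (2 * Suc p)"
  have Fp: "?F > 0" by (simp add: fib_neq_0_nat)
  have f: "fib (2 * Suc p + 2) = fib (2*p+1) + 2 * ?F"
    using fibS[of "2 * Suc p"] fibS[of "2*p+1"] by simp
  have f1: "fib (2*p+1) \<le> ?F" by (simp add: fib_mono)
  have f0: "fib (2*p+1) > 0" by (simp add: fib_neq_0_nat)
  show ?thesis
  proof
    assume nA: "n \<in> A2k (Suc p)"
    then have ge: "?F \<le> n" using A_ge by blast
    have mn: "Min (CG n) = ?F" using nA unfolding A2k_def by simp
    show "n = ?F \<or> n = 2 * ?F"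
    proof (cases "n < 2 * ?F")
      case True
      define r where "r = n - ?F"
      have r: "r < ?F" "n = r + ?F" using True ge unfolding r_def by auto
      have "r = 0"
      proof (rule ccontr)
        assume "r \<noteq> 0"
        then have "Min (CG n) = Min (CG r)" using Min1[OF r(1)] r(2) by simp
        then show False using Minr_lt[OF r(1) `r \<noteq> 0`] mn by simp
      qed
      then show ?thesis using r by simp
    next
      case False
      define r where "r = n - 2 * ?F"
      have r: "r < fib (2*p+1)" "n = r + 2 * ?F" using False assms f unfolding r_def by auto
      have r': "r < ?F" using r f1 by linarith
      have "r = 0"
      proof (rule ccontr)
        assume "r \<noteq> 0"
        then have "Min (CG n) = Min (CG r)" using Min2[OF r(1)] r(2) by simp
        then show False using Minr_lt[OF r' `r \<noteq> 0`] mn by simp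
      qed
      then show ?thesis using r by simp
    qed
  next
    assume "n = ?F \<or> n = 2 * ?F"
    then show "n \<in> A2k (Suc p)"
    proof
      assume n: "n = ?F"
      have "Min (CG (0 + ?F)) = ?F" using Min1[of 0 p] Fp by simp
      then show ?thesis using n Fp unfolding A2k_def by simp
    next
      assume n: "n = 2 * ?F"
      have "Min (CG (0 + 2 * ?F)) = ?F" using Min2[of 0 p] f0 by simp
      then show ?thesis using n Fp unfolding A2k_def by simp
    qed
  qed
qed

definition C :: "nat set \<Rightarrow> nat \<Rightarrow> nat" where
  "C A x = card {n\<in>A. n < x}"

lemma fin_below: "finite {n\<in>A. n < (x::nat)}"
proof -
  have "{n\<in>A. n < x} \<subseteq> {..<x}" by blast
  then show ?thesis by (rule finite_subset) simp
qed

lemma card_split: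
  assumes "a \<le> (b::nat)"
  shows "C A b = C A a + card {n\<in>A. a \<le> n \<and> n < b}"
proof -
  have U: "{n\<in>A. n < b} = {n\<in>A. n < a} \<union> {n\<in>A. a \<le> n \<and> n < b}"
  proof (intro equalityI subsetI)
    fix x assume "x \<in> {n\<in>A. n < b}" then show "x \<in> {n\<in>A. n < a} \<union> {n\<in>A. a \<le> n \<and> n < b}"
      by (cases "x < a") simp_all
  next
    fix x assume "x \<in> {n\<in>A. n < a} \<union> {n\<in>A. a \<le> n \<and> n < b}"
    then show "x \<in> {n\<in>A. n < b}" using assms by (auto simp del: Collect_conj_eq)
  qed
  have D: "{n\<in>A. n < a} \<inter> {n\<in>A. a \<le> n \<and> n < b} = {}" by auto
  have F2: "finite {n\<in>A. a \<le> n \<and> n < b}"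
  proof -
    have "{n\<in>A. a \<le> n \<and> n < b} \<subseteq> {..<b}" by blast
    then show ?thesis by (rule finite_subset) simp
  qed
  have "card {n\<in>A. n < b} = card {n\<in>A. n < a} + card {n\<in>A. a \<le> n \<and> n < b}"
    unfolding U by (rule card_Un_disjoint[OF fin_below F2 D])
  then show ?thesis unfolding C_def .
qed

lemma card_shift:
  assumes "\<And>r. r < b \<Longrightarrow> (r + F \<in> A \<longleftrightarrow> r \<in> A)"
  shows "card {n\<in>A. F \<le> n \<and> n < b + (F::nat)} = C A b"
proof -
  have eq: "{n\<in>A. F \<le> n \<and> n < b + F} = (\<lambda>r. r + F) ` {r\<in>A. r < b}"
  proof (intro equalityI subsetI)
    fix n assume n: "n \<in> {n\<in>A. F \<le> n \<and> n < b + F}"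
    then have "n - F < b" "n - F + F = n" by auto
    have "n - F + F \<in> A" using n `n - F + F = n` by simp
    then have "n - F \<in> A" using assms[OF `n - F < b`] by simp
    then have "n - F \<in> {r\<in>A. r < b}" using `n - F < b` by simp
    then have "n - F + F \<in> (\<lambda>r. r + F) ` {r\<in>A. r < b}" by (rule imageI)
    then show "n \<in> (\<lambda>r. r + F) ` {r\<in>A. r < b}" using `n - F + F = n` by simp
  next
    fix n assume "n \<in> (\<lambda>r. r + F) ` {r\<in>A. r < b}"
    then obtain r where r: "n = r + F" "r \<in> A" "r < b" by blast
    have "r + F \<in> A" using assms[OF r(3)] r(2) by simp
    then show "n \<in> {n\<in>A. F \<le> n \<and> n < b + F}" using r by simp
  qed
  have inj: "inj_on (\<lambda>r. r + F) {r\<in>A. r < b}" by (simp add: inj_on_def)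
  show ?thesis unfolding C_def eq using card_image[OF inj] .
qed

lemma rec1:
  assumes "1 \<le> k" "k \<le> p"
  shows "C (A2k k) (fib (2*p+3)) = C (A2k k) (fib (2*p+2)) + C (A2k k) (fib (2*p+1))"
proof -
  let ?a = "fib (2*p+2)"
  have e: "fib (2*p+3) = fib (2*p+1) + ?a" using fibS[of "2*p+1"] by (simp add: numeral_eq_Suc)
  have le: "fib (2*p+1) \<le> ?a" by (simp add: fib_mono)
  have "card {n\<in>A2k k. ?a \<le> n \<and> n < fib (2*p+1) + ?a} = C (A2k k) (fib (2*p+1))"
  proof (rule card_shift)
    fix r assume "r < fib (2*p+1)"
    then have "r < fib (2 * Suc p)" using le by simp
    then show "r + ?a \<in> A2k k \<longleftrightarrow> r \<in> A2k k" using memb1[OF assms] by simp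
  qed
  then show ?thesis using card_split[of ?a "fib (2*p+3)" "A2k k"] e by simp
qed

lemma rec2:
  assumes "1 \<le> k" "k \<le> p"
  shows "C (A2k k) (fib (2*p+4)) = 2 * C (A2k k) (fib (2*p+2)) + C (A2k k) (fib (2*p+1))"
proof -
  let ?a = "fib (2*p+2)"
  have e: "fib (2*p+4) = fib (2*p+1) + 2 * ?a"
    using fibS[of "2*p+1"] fibS[of "2*p+2"] by (simp add: numeral_eq_Suc)
  have le: "fib (2*p+1) \<le> ?a" by (simp add: fib_mono)
  have c1: "card {n\<in>A2k k. ?a \<le> n \<and> n < ?a + ?a} = C (A2k k) ?a"
  proof (rule card_shift)
    fix r assume "r < ?a"
    then have "r < fib (2 * Suc p)" by simp
    then show "r + ?a \<in> A2k k \<longleftrightarrow> r \<in> A2k k" using memb1[OF assms] by simp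
  qed
  have c2: "card {n\<in>A2k k. 2 * ?a \<le> n \<and> n < fib (2*p+1) + 2 * ?a} = C (A2k k) (fib (2*p+1))"
  proof (rule card_shift)
    fix r assume "r < fib (2*p+1)"
    then show "r + 2 * ?a \<in> A2k k \<longleftrightarrow> r \<in> A2k k" using memb2[OF assms] by simp
  qed
  have s1: "C (A2k k) (2 * ?a) = C (A2k k) ?a + C (A2k k) ?a"
    using card_split[of ?a "2 * ?a" "A2k k"] c1 by (simp add: mult_2)
  have s2: "C (A2k k) (fib (2*p+4)) = C (A2k k) (2 * ?a) + C (A2k k) (fib (2*p+1))"
    using card_split[of "2 * ?a" "fib (2*p+4)" "A2k k"] c2 e by simp
  show ?thesis using s1 s2 by simp
qed

lemma base_counts:
  assumes "1 \<le> k"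
  shows "C (A2k k) (fib (2*k)) = 0" "C (A2k k) (fib (2*k+1)) = 1" "C (A2k k) (fib (2*k+2)) = 2"
proof -
  show "C (A2k k) (fib (2*k)) = 0" unfolding C_def using A_ge by fastforce
  obtain p where k: "k = Suc p" using assms by (cases k) auto
  let ?F = "fib (2 * Suc p)"
  have Fp: "?F > 0" by (simp add: fib_neq_0_nat)
  have f: "fib (2 * Suc p + 2) = fib (2*p+1) + 2 * ?F"
    using fibS[of "2 * Suc p"] fibS[of "2*p+1"] by simp
  have f1: "fib (2 * Suc p + 1) = fib (2*p+1) + ?F" using fibS[of "2*p+1"] by simp
  have f2: "fib (2*p+1) \<le> ?F" by (simp add: fib_mono)
  have f0: "fib (2*p+1) > 0" by (simp add: fib_neq_0_nat)
  have "{n\<in>A2k k. n < fib (2*k+2)} = {?F, 2 * ?F}"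
    using base f f0 Fp unfolding k by auto
  then show "C (A2k k) (fib (2*k+2)) = 2" unfolding C_def using Fp by simp
  have "{n\<in>A2k k. n < fib (2*k+1)} = {?F}"
  proof -
    have "n < fib (2*k+1) \<Longrightarrow> n < fib (2 * Suc p + 2)" for n using f f1 k by simp
    then show ?thesis using base f1 f2 f0 Fp unfolding k by auto
  qed
  then show "C (A2k k) (fib (2*k+1)) = 1" unfolding C_def by simp
qed

lemma counts:
  assumes "1 \<le> k"
  shows "C (A2k k) (fib (2*(k+l)+2)) = fib (2*l+3) \<and> C (A2k k) (fib (2*(k+l)+1)) = fib (2*l+2)"
proof (induction l)
  case 0
  have f3: "fib 3 = 2" by (simp add: numeral_eq_Suc fib2)
  have "C (A2k k) (fib (2*k+2)) = 2" "C (A2k k) (fib (2*k+1)) = 1" using base_counts[OF assms] by simp_all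
  then show ?case using f3 by (simp add: fib2)
next
  case (Suc l)
  let ?p = "k + l"
  have r1: "C (A2k k) (fib (2*?p+3)) = C (A2k k) (fib (2*?p+2)) + C (A2k k) (fib (2*?p+1))"
    using rec1[OF assms, of ?p] by simp
  have r2: "C (A2k k) (fib (2*?p+4)) = 2 * C (A2k k) (fib (2*?p+2)) + C (A2k k) (fib (2*?p+1))"
    using rec2[OF assms, of ?p] by simp
  have i1: "C (A2k k) (fib (2*?p+2)) = fib (2*l+3)" "C (A2k k) (fib (2*?p+1)) = fib (2*l+2)"
    using Suc by simp_all
  have g1: "fib (2*l+4) = fib (2*l+3) + fib (2*l+2)" using fibS[of "2*l+2"] by (simp add: numeral_eq_Suc)
  have g2: "fib (2*l+5) = fib (2*l+4) + fib (2*l+3)" using fibS[of "2*l+3"] by (simp add: numeral_eq_Suc)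
  have a: "2*(k + Suc l)+2 = 2*?p+4" "2*(k + Suc l)+1 = 2*?p+3" "2*Suc l+3 = 2*l+5" "2*Suc l+2 = 2*l+4" by simp_all
  show ?case unfolding a using r1 r2 i1 g1 g2 by simp
qed

lemma enum_card:
  fixes S :: "nat set"
  assumes "infinite S"
  shows "card {x\<in>S. x < enumerate S i} = i"
proof -
  have "{x\<in>S. x < enumerate S i} = enumerate S ` {..<i}"
  proof (intro equalityI subsetI)
    fix x assume x: "x \<in> {x\<in>S. x < enumerate S i}"
    then obtain j where j: "enumerate S j = x" using enumerate_Ex[OF assms] by blast
    then have "j < i" using x assms by auto
    then show "x \<in> enumerate S ` {..<i}" using j by blast
  next
    fix x assume "x \<in> enumerate S ` {..<i}"
    then obtain j where "j < i" "x = enumerate S j" by blast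
    then show "x \<in> {x\<in>S. x < enumerate S i}" using assms enumerate_in_set by auto
  qed
  then show ?thesis using inj_enumerate[OF assms] by (simp add: card_image inj_on_subset)
qed

lemma Max_top:
  assumes "1 \<le> m" "fib (2*m) \<le> n" "n < fib (2*m+2)"
  shows "Max (CG n) = fib (2*m)"
proof -
  obtain p where m: "m = Suc p" using assms by (cases m) auto
  let ?c = "cg_digits n"
  have d: "valid ?c" "supp ?c m" "sumc ?c m = n" using digits_ex[OF assms(3)] by simp_all
  have cm: "?c m \<noteq> 0"
  proof
    assume "?c m = 0"
    then have "sumc ?c p = n" using d(3) unfolding m by (simp add: sumc_Suc)
    moreover have "sumc ?c p < fib (2*p+2)" using bound[OF d(1)] by blast
    ultimately show False using assms(2) m by simp
  qed
  have cr: "CG n = {fib (2 * i) | i. i \<ge> 1 \<and> ?c i \<noteq> 0}" unfolding CG_def ..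
  have "fib (2*m) \<in> CG n" unfolding cr using cm assms(1) by blast
  moreover have "\<forall>x\<in>CG n. x \<le> fib (2*m)"
  proof
    fix x assume "x \<in> CG n"
    then obtain i where i: "x = fib (2*i)" "?c i \<noteq> 0" unfolding cr by blast
    then have "i \<le> m" using d(2) unfolding supp_def by (meson not_le)
    then show "x \<le> fib (2*m)" using i fib_mono by simp
  qed
  ultimately show ?thesis using CG_fin by (intro Max_eqI) auto
qed

lemma exists_top:
  assumes "(1::nat) \<le> n"
  shows "\<exists>m\<ge>1. fib (2*m) \<le> n \<and> n < fib (2*m+2)"
proof -
  define m where "m = (LEAST m. n < fib (2*m+2))"
  have lt: "n < fib (2*m+2)" unfolding m_def by (rule LeastI[of _ n]) (rule fib_lt)
  have "m \<noteq> 0"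
  proof
    assume "m = 0"
    then have "n < 1" using lt by (simp add: fib2)
    then show False using assms by simp
  qed
  then obtain p where mp: "m = Suc p" by (cases m) auto
  have "\<not> n < fib (2*p+2)" using mp not_less_Least[of p "\<lambda>m. n < fib (2*m+2)"] unfolding m_def by simp
  then have "fib (2*m) \<le> n" using mp by simp
  then show ?thesis using lt `m \<noteq> 0` by (intro exI[of _ m]) auto
qed




lemma C_mono: "x \<le> y \<Longrightarrow> C A x \<le> C A (y::nat)"
  unfolding C_def by (rule card_mono[OF fin_below]) auto

lemma C_strict: "n \<in> A \<Longrightarrow> n < y \<Longrightarrow> C A n < C A (y::nat)"
  unfolding C_def by (rule psubset_card_mono[OF fin_below]) auto

theorem lemma3p3:
  fixes k l :: nat
  assumes "k \<ge> 1" and "l \<ge> 1"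
  shows "{n \<in> A2k k. Max (CG n) = fib (2 * k + 2 * l)} =
         {q k j | j. fib (2 * l + 1) + 1 \<le> j \<and> j \<le> fib (2 * l + 3)}"
proof -
  let ?A = "A2k k"
  let ?lo = "fib (2 * k + 2 * l)"
  let ?hi = "fib (2 * k + 2 * l + 2)"
  obtain l' where l': "l = Suc l'" using assms(2) by (cases l) auto
  have cnt1: "C ?A ?lo = fib (2 * l + 1)"
  proof -
    have c: "C ?A (fib (2*(k+l')+2)) = fib (2*l'+3)" using counts[OF assms(1)] by blast
    have e: "2*(k+l')+2 = 2 * k + 2 * l" "2*l'+3 = 2*l+1" using l' by simp_all
    show ?thesis using c unfolding e .
  qed
  have cnt2: "C ?A ?hi = fib (2 * l + 3)"
  proof -
    have c: "C ?A (fib (2*(k+l)+2)) = fib (2*l+3)" using counts[OF assms(1)] by blast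
    have e: "2*(k+l)+2 = 2 * k + 2 * l + 2" by simp
    show ?thesis using c unfolding e .
  qed
  have inf: "infinite ?A"
  proof
    assume fin: "finite ?A"
    define L where "L = card ?A"
    have "C ?A (fib (2*(k+L)+2)) = fib (2*L+3)" using counts[OF assms(1)] by blast
    moreover have "C ?A (fib (2*(k+L)+2)) \<le> card ?A" unfolding C_def by (rule card_mono[OF fin]) auto
    moreover have "L < fib (2*L+3)" using fib_lt[of L] fib_mono[of "2*L+2" "2*L+3"] by simp
    ultimately show False unfolding L_def by simp
  qed
  have top: "Max (CG n) = ?lo \<longleftrightarrow> ?lo \<le> n \<and> n < ?hi" if nA: "n \<in> ?A" for n
  proof
    assume "?lo \<le> n \<and> n < ?hi"
    then show "Max (CG n) = ?lo" using Max_top[of "k+l" n] assms by (simp add: algebra_simps)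
  next
    assume mx: "Max (CG n) = ?lo"
    have "n \<ge> 1" using nA unfolding A2k_def by simp
    then obtain m where m: "m \<ge> 1" "fib (2*m) \<le> n" "n < fib (2*m+2)" using exists_top by blast
    then have "Max (CG n) = fib (2*m)" using Max_top by blast
    then have "fib (2*m) = fib (2*(k+l))" using mx by (simp add: algebra_simps)
    then have "m = k + l" using fib_even_inj m(1) assms by simp
    then show "?lo \<le> n \<and> n < ?hi" using m by (simp add: algebra_simps)
  qed
  show ?thesis
  proof (intro equalityI subsetI)
    fix n assume "n \<in> {n \<in> ?A. Max (CG n) = ?lo}"
    then have nA: "n \<in> ?A" and b: "?lo \<le> n" "n < ?hi" using top by auto
    obtain i where i: "enumerate ?A i = n" using enumerate_Ex[OF inf nA] by blast
    have ci: "C ?A n = i" using enum_card[OF inf, of i] i unfolding C_def by simp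
    have "fib (2 * l + 1) \<le> i" using C_mono[OF b(1), of ?A] cnt1 ci by simp
    moreover have "i < fib (2 * l + 3)" using C_strict[OF nA b(2)] cnt2 ci by simp
    moreover have "q k (i + 1) = n" unfolding q_def using i by simp
    ultimately show "n \<in> {q k j | j. fib (2 * l + 1) + 1 \<le> j \<and> j \<le> fib (2 * l + 3)}"
      by (intro CollectI exI[of _ "i+1"]) simp
  next
    fix n assume "n \<in> {q k j | j. fib (2 * l + 1) + 1 \<le> j \<and> j \<le> fib (2 * l + 3)}"
    then obtain j where j: "n = q k j" "fib (2 * l + 1) + 1 \<le> j" "j \<le> fib (2 * l + 3)" by blast
    have n: "n = enumerate ?A (j - 1)" using j(1) unfolding q_def .
    have nA: "n \<in> ?A" using n enumerate_in_set[OF inf] by simp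
    have ci: "C ?A n = j - 1" using enum_card[OF inf, of "j - 1"] n unfolding C_def by simp
    have b1: "?lo \<le> n"
    proof (rule ccontr)
      assume "\<not> ?lo \<le> n"
      then have "C ?A n < C ?A ?lo" using C_strict[OF nA] by simp
      then show False using ci cnt1 j(2) by simp
    qed
    have b2: "n < ?hi"
    proof (rule ccontr)
      assume "\<not> n < ?hi"
      then have "C ?A ?hi \<le> C ?A n" using C_mono by simp
      then show False using ci cnt2 j(2,3) by simp
    qed
    show "n \<in> {n \<in> ?A. Max (CG n) = ?lo}" using top[OF nA] b1 b2 nA by simp
  qed
qed


end
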